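(* Let $w:\{0,1\}^L\to\mathbb{R}_{\ge 0}$ be a generic fitness landscape displaying universal positive epistasis. Then $w$ induces the standard staircase triangulation of $[0,1]^L$.
   Context: Genotypes $g\in\{0,1\}^L$ are identified with subsets $\{i:g_i=1\}$ of $\mathcal{L}=\{1,\dots,L\}$ and with vertices of $[0,1]^L$. The landscape displays universal positive epistasis if for all $b'\subset b\subseteq\mathcal{L}$ and all $s\subseteq\mathcal{L}\setminus b$ one has $w_{b\cup s}-w_b\ge w_{b'\cup s}-w_{b'}$; equivalently $w_{g\cup g'}+w_{g\cap g'}\ge w_g+w_{g'}$ for all genotypes $g,g'$. The triangulation induced by $w$ is the regular subdivision of $[0,1]^L$ obtained by projecting the upper faces of $\mathrm{conv}\{(g,w_g)\}\subset\mathbb{R}^{L+1}$; $w$ is generic if all $w_g$ are distinct and this subdivision is a triangulation. The standard staircase triangulation consists of the $L!$ simplices $\{g_0\subset g_1\subset\cdots\subset g_L\}$ with $g_0=\emptyset$, $g_L=\mathcal{L}$, $|g_k|=k$. *)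

theory Defs
  imports "HOL-Analysis.Analysis"
begin

text \<open>Loci are the elements of a finite type 'n, so L = CARD('n).
  A genotype is a subset of the loci; it is identified with the 0/1 vertex
  of the cube [0,1]^L given by its indicator vector.\<close>

definition geno_vec :: "'n::finite set \<Rightarrow> real^'n" where
  "geno_vec g = (\<chi> i. if i \<in> g then 1 else 0)"

definition universal_positive_epistasis :: "('n::finite set \<Rightarrow> real) \<Rightarrow> bool" where
  "universal_positive_epistasis w \<longleftrightarrow>
     (\<forall>b' b s. b' \<subset> b \<longrightarrow> s \<inter> b = {} \<longrightarrow> w (b \<union> s) - w b \<ge> w (b' \<union> s) - w b')"

text \<open>A (nonempty) cell of the regular subdivision induced by w: the set of genotypes
  whose lifted points (g, w g) lie on a non-vertical supporting hyperplane from above,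
  i.e. on an upper face of conv {(g, w g)}.\<close>
definition upper_cell :: "('n::finite set \<Rightarrow> real) \<Rightarrow> 'n set set \<Rightarrow> bool" where
  "upper_cell w S \<longleftrightarrow> S \<noteq> {} \<and>
     (\<exists>(a::real^'n) (c::real). (\<forall>g. w g \<le> c + a \<bullet> geno_vec g) \<and>
                         S = {g. w g = c + a \<bullet> geno_vec g})"

definition generic_landscape :: "('n::finite set \<Rightarrow> real) \<Rightarrow> bool" where
  "generic_landscape w \<longleftrightarrow> inj w \<and>
     (\<forall>S. upper_cell w S \<longrightarrow> \<not> affine_dependent (geno_vec ` S))"

definition induced_triangulation :: "('n::finite set \<Rightarrow> real) \<Rightarrow> 'n set set set" where
  "induced_triangulation w =
     {S. upper_cell w S \<and> (\<forall>T. upper_cell w T \<longrightarrow> S \<subseteq> T \<longrightarrow> T = S)}"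

text \<open>The standard staircase triangulation: its L! maximal simplices are the maximal chains
  {} = g_0 \<subset> g_1 \<subset> ... \<subset> g_L = all loci with |g_k| = k.\<close>
definition staircase_triangulation :: "'n::finite set set set" where
  "staircase_triangulation =
     {S. \<exists>ch :: nat \<Rightarrow> 'n set.
           ch 0 = {} \<and> ch CARD('n) = UNIV \<and>
           (\<forall>k < CARD('n). ch k \<subset> ch (Suc k)) \<and>
           (\<forall>k \<le> CARD('n). card (ch k) = k) \<and>
           S = ch ` {0..CARD('n)}}"

end

theory Submission
  imports Defs
begin

lemma geno_vec_inj: "inj geno_vec"
proof (rule injI)
  fix x y :: "'n::finite set"
  assume "geno_vec x = geno_vec y"
  then have "\<forall>i. (if i \<in> x then 1 else 0 :: real) = (if i \<in> y then 1 else 0)"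
    unfolding geno_vec_def vec_eq_iff by simp
  then show "x = y" by (metis (full_types) one_neq_zero set_eqI)
qed

lemma cell_card:
  fixes w :: "'n::finite set \<Rightarrow> real"
  assumes "generic_landscape w" "upper_cell w T"
  shows "card T \<le> CARD('n) + 1"
proof -
  have ni: "\<not> affine_dependent (geno_vec ` T)" using assms unfolding generic_landscape_def by blast
  have "card (geno_vec ` T) = card T" by (rule card_image[OF inj_on_subset[OF geno_vec_inj subset_UNIV]])
  moreover have "\<not> card (geno_vec ` T) \<ge> DIM(real^'n) + 2"
    using ni affine_dependent_biggerset[of "geno_vec ` T"] by auto
  ultimately show ?thesis by simp
qed

lemma geno_vec_union_inter:
  "geno_vec (g \<union> g') + geno_vec (g \<inter> g') = geno_vec g + geno_vec g'"
  unfolding geno_vec_def vec_eq_iff by auto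

lemma cell_chain:
  fixes w :: "'n::finite set \<Rightarrow> real"
  assumes gen: "generic_landscape w" and upe: "universal_positive_epistasis w"
    and cell: "upper_cell w S" and g: "g \<in> S" and g': "g' \<in> S"
  shows "g \<subseteq> g' \<or> g' \<subseteq> g"
proof (rule ccontr)
  assume nc: "\<not> (g \<subseteq> g' \<or> g' \<subseteq> g)"
  obtain a c where le: "\<forall>g. w g \<le> c + a \<bullet> geno_vec g"
    and S: "S = {g. w g = c + a \<bullet> geno_vec g}" using cell unfolding upper_cell_def by blast
  have sup: "w (g \<union> g') - w g \<ge> w g' - w (g \<inter> g')"
  proof -
    have "g \<inter> g' \<subset> g" using nc by blast
    moreover have "(g' - g) \<inter> g = {}" by blast
    ultimately have "w (g \<union> (g' - g)) - w g \<ge> w ((g \<inter> g') \<union> (g' - g)) - w (g \<inter> g')"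
      using upe unfolding universal_positive_epistasis_def by blast
    moreover have "g \<union> (g' - g) = g \<union> g'" "(g \<inter> g') \<union> (g' - g) = g'" by auto
    ultimately show ?thesis by simp
  qed
  have hv: "a \<bullet> geno_vec (g \<union> g') + a \<bullet> geno_vec (g \<inter> g') = a \<bullet> geno_vec g + a \<bullet> geno_vec g'"
    using geno_vec_union_inter[of g g'] by (metis inner_add_right)
  have wg: "w g = c + a \<bullet> geno_vec g" "w g' = c + a \<bullet> geno_vec g'" using g g' S by auto
  have l1: "w (g \<union> g') \<le> c + a \<bullet> geno_vec (g \<union> g')" and l2: "w (g \<inter> g') \<le> c + a \<bullet> geno_vec (g \<inter> g')"
    using le by auto
  have "w (g \<union> g') = c + a \<bullet> geno_vec (g \<union> g')" "w (g \<inter> g') = c + a \<bullet> geno_vec (g \<inter> g')"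
    using sup hv wg l1 l2 by linarith+
  then have inS: "g \<union> g' \<in> S" "g \<inter> g' \<in> S" using S by auto
  define A where "A = geno_vec (g \<union> g')"
  define B where "B = geno_vec (g \<inter> g')"
  define C where "C = geno_vec g"
  define D where "D = geno_vec g'"
  have dist: "g \<union> g' \<noteq> g \<inter> g'" "g \<union> g' \<noteq> g" "g \<union> g' \<noteq> g'" "g \<inter> g' \<noteq> g" "g \<inter> g' \<noteq> g'" "g \<noteq> g'"
    using nc by blast+
  then have dv: "A \<noteq> B" "A \<noteq> C" "A \<noteq> D" "B \<noteq> C" "B \<noteq> D" "C \<noteq> D"
    unfolding A_def B_def C_def D_def using geno_vec_inj by (metis injD)+
  define u where "u = (\<lambda>v. if v = A \<or> v = B then (1::real) else -1)"
  have "affine_dependent (geno_vec ` S)"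
    unfolding affine_dependent_explicit
  proof (intro exI conjI)
    show "finite {A, B, C, D}" by simp
    show "{A, B, C, D} \<subseteq> geno_vec ` S" using inS g g' unfolding A_def B_def C_def D_def by auto
    show "sum u {A, B, C, D} = 0" using dv unfolding u_def by simp
    show "\<exists>v\<in>{A, B, C, D}. u v \<noteq> 0" unfolding u_def by auto
    have "A + B = C + D" unfolding A_def B_def C_def D_def by (rule geno_vec_union_inter)
    then show "(\<Sum>v\<in>{A, B, C, D}. u v *\<^sub>R v) = 0" using dv unfolding u_def
      by (simp add: algebra_simps)
  qed
  then show False using gen cell unfolding generic_landscape_def by blast
qed


lemma chain_mono:
  fixes ch :: "nat \<Rightarrow> 'n set"
  assumes "\<forall>k < L. ch k \<subset> ch (Suc k)"
  shows "k \<le> j \<Longrightarrow> j \<le> L \<Longrightarrow> ch k \<subseteq> ch j"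
proof (induction j)
  case 0 then show ?case by simp
next
  case (Suc j)
  show ?case
  proof (cases "k = Suc j")
    case True then show ?thesis by simp
  next
    case False
    then have "ch k \<subseteq> ch j" using Suc by simp
    also have "ch j \<subseteq> ch (Suc j)" using assms Suc.prems Suc_le_lessD by blast
    finally show ?thesis .
  qed
qed

lemma staircase_cell:
  fixes w :: "'n::finite set \<Rightarrow> real" and ch :: "nat \<Rightarrow> 'n set"
  assumes gen: "generic_landscape w" and upe: "universal_positive_epistasis w"
    and c0: "ch 0 = {}" and cL: "ch CARD('n) = UNIV"
    and cs: "\<forall>k < CARD('n). ch k \<subset> ch (Suc k)"
    and cc: "\<forall>k \<le> CARD('n). card (ch k) = k"
  shows "upper_cell w (ch ` {0..CARD('n)})"
proof -
  define L where "L = CARD('n)"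
  have mono: "\<And>k j. k \<le> j \<Longrightarrow> j \<le> L \<Longrightarrow> ch k \<subseteq> ch j"
    using chain_mono[OF cs] unfolding L_def by blast
  define D where "D = (\<lambda>k. ch (Suc k) - ch k)"
  have Dsing: "\<exists>x. D k = {x} \<and> x \<notin> ch k \<and> ch (Suc k) = insert x (ch k)" if "k < L" for k
  proof -
    have sub: "ch k \<subseteq> ch (Suc k)" using cs that L_def by auto
    have "card (D k) = 1" unfolding D_def using cc that L_def sub
      by (simp add: card_Diff_subset)
    then obtain x where "D k = {x}" by (meson card_1_singletonE)
    then show ?thesis using sub unfolding D_def by blast
  qed
  define d where "d = (\<lambda>k. w (ch (Suc k)) - w (ch k))"
  define a :: "real^'n" where "a = (\<chi> i. \<Sum>k<L. if i \<in> D k then d k else 0)"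
  define E where "E = (\<lambda>g k. if D k \<subseteq> g then d k else 0)"
  have ainner: "a \<bullet> geno_vec g = (\<Sum>k<L. E g k)" for g
  proof -
    have "a \<bullet> geno_vec g = (\<Sum>i\<in>UNIV. a $ i * (if i \<in> g then 1 else 0))"
      unfolding inner_vec_def geno_vec_def by simp
    also have "\<dots> = (\<Sum>i\<in>UNIV. \<Sum>k<L. if i \<in> g \<and> i \<in> D k then d k else 0)"
      unfolding a_def by (auto intro!: sum.cong simp: sum_distrib_right)
    also have "\<dots> = (\<Sum>k<L. \<Sum>i\<in>UNIV. if i \<in> g \<and> i \<in> D k then d k else 0)"
      by (rule sum.swap)
    also have "\<dots> = (\<Sum>k<L. E g k)"
    proof (rule sum.cong)
      fix k assume "k \<in> {..<L}"
      then have "k < L" by simp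
      then obtain x where x: "D k = {x}" using Dsing by blast
      have "(\<Sum>i\<in>UNIV. if i \<in> g \<and> i \<in> D k then d k else 0) = (\<Sum>i\<in>UNIV. if i = x then (if x \<in> g then d k else 0) else 0)"
        using x by (intro sum.cong) auto
      also have "\<dots> = E g k" unfolding E_def using x by simp
      finally show "(\<Sum>i\<in>UNIV. if i \<in> g \<and> i \<in> D k then d k else 0) = E g k" .
    qed simp
    finally show ?thesis .
  qed
  have wtele: "w g = w {} + (\<Sum>k<L. w (g \<inter> ch (Suc k)) - w (g \<inter> ch k))" for g
    using sum_lessThan_telescope[of "\<lambda>k. w (g \<inter> ch k)" L] c0 cL unfolding L_def by simp
  have step: "w (g \<inter> ch (Suc k)) - w (g \<inter> ch k) \<le> E g k" if kL: "k < L" for g k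
  proof -
    obtain x where x: "D k = {x}" "x \<notin> ch k" "ch (Suc k) = insert x (ch k)" using Dsing[OF kL] by blast
    show ?thesis
    proof (cases "x \<in> g")
      case False
      then have "g \<inter> ch (Suc k) = g \<inter> ch k" using x by auto
      then show ?thesis using False x unfolding E_def by auto
    next
      case True
      have e: "g \<inter> ch (Suc k) = (g \<inter> ch k) \<union> {x}" using True x by auto
      have Eg: "E g k = w (ch k \<union> {x}) - w (ch k)" using True x unfolding E_def d_def by simp
      show ?thesis
      proof (cases "g \<inter> ch k = ch k")
        case True then show ?thesis using e Eg by simp
      next
        case False
        then have "g \<inter> ch k \<subset> ch k" by blast
        moreover have "{x} \<inter> ch k = {}" using x by auto
        ultimately have "w (ch k \<union> {x}) - w (ch k) \<ge> w ((g \<inter> ch k) \<union> {x}) - w (g \<inter> ch k)"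
          using upe unfolding universal_positive_epistasis_def by blast
        then show ?thesis using e Eg by simp
      qed
    qed
  qed
  have stepeq: "w (ch j \<inter> ch (Suc k)) - w (ch j \<inter> ch k) = E (ch j) k" if kL: "k < L" and jL: "j \<le> L" for j k
  proof -
    obtain x where x: "D k = {x}" "x \<notin> ch k" "ch (Suc k) = insert x (ch k)" using Dsing[OF kL] by blast
    show ?thesis
    proof (cases "k < j")
      case True
      have "ch (Suc k) \<subseteq> ch j" using mono kL jL True by auto
      then have "ch j \<inter> ch (Suc k) = ch (Suc k)" "ch j \<inter> ch k = ch k" "D k \<subseteq> ch j" using x by auto
      then show ?thesis unfolding E_def d_def by simp
    next
      case False
      have "ch j \<subseteq> ch k" using mono kL jL False by auto
      then have "ch j \<inter> ch (Suc k) = ch j" "ch j \<inter> ch k = ch j" "\<not> D k \<subseteq> ch j" using x by auto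
      then show ?thesis unfolding E_def by simp
    qed
  qed
  define c where "c = w {}"
  have le: "w g \<le> c + a \<bullet> geno_vec g" for g
  proof -
    have "(\<Sum>k<L. w (g \<inter> ch (Suc k)) - w (g \<inter> ch k)) \<le> (\<Sum>k<L. E g k)"
      by (rule sum_mono) (use step in auto)
    then show ?thesis using wtele[of g] ainner[of g] unfolding c_def by simp
  qed
  have eq: "w (ch j) = c + a \<bullet> geno_vec (ch j)" if "j \<le> L" for j
  proof -
    have "(\<Sum>k<L. w (ch j \<inter> ch (Suc k)) - w (ch j \<inter> ch k)) = (\<Sum>k<L. E (ch j) k)"
      by (rule sum.cong) (use stepeq that in auto)
    then show ?thesis using wtele[of "ch j"] ainner[of "ch j"] unfolding c_def by simp
  qed
  define U where "U = {g. w g = c + a \<bullet> geno_vec g}"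
  have Ucell: "upper_cell w U" unfolding upper_cell_def U_def using le eq[of 0] by blast
  have sub: "ch ` {0..L} \<subseteq> U" unfolding U_def using eq by auto
  have "inj_on ch {0..L}"
    by (rule inj_onI) (metis atLeastAtMost_iff cc L_def)
  then have "card (ch ` {0..L}) = L + 1" by (simp add: card_image)
  moreover have "card U \<le> L + 1" using cell_card[OF gen Ucell] L_def by simp
  moreover have "card (ch ` {0..L}) \<le> card U" using sub by (intro card_mono) auto
  ultimately have "ch ` {0..L} = U" using sub by (intro card_subset_eq) auto
  then show ?thesis using Ucell L_def by simp
qed


lemma filter_split_sorted:
  assumes "sorted_wrt (\<lambda>x y. y \<in> s \<longrightarrow> x \<in> s) ys"
  shows "ys = filter (\<lambda>x. x \<in> s) ys @ filter (\<lambda>x. x \<notin> s) ys"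
  using assms
proof (induction ys)
  case Nil then show ?case by simp
next
  case (Cons a zs)
  show ?case
  proof (cases "a \<in> s")
    case True then show ?thesis using Cons by simp
  next
    case False
    then have "\<forall>z\<in>set zs. z \<notin> s" using Cons.prems by auto
    then have "filter (\<lambda>x. x \<in> s) zs = []" "filter (\<lambda>x. x \<notin> s) zs = zs"
      by (auto simp: filter_empty_conv)
    then show ?thesis using False by simp
  qed
qed

lemma chain_extend:
  fixes S :: "'n::finite set set"
  assumes chain: "\<forall>x\<in>S. \<forall>y\<in>S. x \<subseteq> y \<or> y \<subseteq> x"
  shows "\<exists>ch :: nat \<Rightarrow> 'n set.
           ch 0 = {} \<and> ch CARD('n) = UNIV \<and>
           (\<forall>k < CARD('n). ch k \<subset> ch (Suc k)) \<and>
           (\<forall>k \<le> CARD('n). card (ch k) = k) \<and> S \<subseteq> ch ` {0..CARD('n)}"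
proof -
  define f where "f = (\<lambda>i. card {t\<in>S. i \<notin> t})"
  have flt: "f i < f j" if "s \<in> S" "i \<in> s" "j \<notin> s" for s i j
  proof -
    have "{t\<in>S. i \<notin> t} \<subseteq> {t\<in>S. j \<notin> t}"
    proof
      fix t assume t: "t \<in> {t\<in>S. i \<notin> t}"
      then have "t \<subseteq> s" using chain that by blast
      then show "t \<in> {t\<in>S. j \<notin> t}" using t that by blast
    qed
    moreover have "s \<in> {t\<in>S. j \<notin> t}" "s \<notin> {t\<in>S. i \<notin> t}" using that by auto
    ultimately have "{t\<in>S. i \<notin> t} \<subset> {t\<in>S. j \<notin> t}" by blast
    then show ?thesis unfolding f_def by (rule psubset_card_mono[OF finite])
  qed
  obtain xs :: "'n list" where xs: "set xs = UNIV" "distinct xs"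
    using finite_distinct_list[of "UNIV :: 'n set"] by auto
  define ys where "ys = sort_key f xs"
  have ys: "set ys = UNIV" "distinct ys" "sorted (map f ys)" "length ys = CARD('n)"
    unfolding ys_def using xs distinct_card[of xs] by auto
  define ch where "ch = (\<lambda>m. set (take m ys))"
  have cc: "card (ch k) = k" if "k \<le> CARD('n)" for k
    unfolding ch_def using ys that by (simp add: distinct_card)
  have cs: "ch k \<subset> ch (Suc k)" if "k < CARD('n)" for k
  proof -
    have tk: "take (Suc k) ys = take k ys @ [ys ! k]" using ys that by (simp add: take_Suc_conv_app_nth)
    then have "ch (Suc k) = insert (ys ! k) (ch k)" unfolding ch_def by auto
    moreover have "distinct (take k ys @ [ys ! k])" using tk ys(2) distinct_take by metis
    then have "ys ! k \<notin> ch k" unfolding ch_def by simp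
    ultimately show ?thesis by blast
  qed
  have inS: "s \<in> ch ` {0..CARD('n)}" if sS: "s \<in> S" for s
  proof -
    have "sorted_wrt (\<lambda>x y. f x \<le> f y) ys" using ys(3) by (simp add: sorted_map)
    then have sw: "sorted_wrt (\<lambda>x y. y \<in> s \<longrightarrow> x \<in> s) ys"
    proof (rule sorted_wrt_mono_rel[rotated])
      fix x y assume "f x \<le> f y"
      then show "y \<in> s \<longrightarrow> x \<in> s" using flt[OF sS, of y x] by linarith
    qed
    define P where "P = filter (\<lambda>x. x \<in> s) ys"
    have split: "ys = P @ filter (\<lambda>x. x \<notin> s) ys" using filter_split_sorted[OF sw] P_def by simp
    have setP: "set P = s" unfolding P_def using ys by auto
    have "distinct P" unfolding P_def using ys(2) by simp
    then have lenP: "length P = card s" using distinct_card setP by metis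
    obtain Q where PQ: "ys = P @ Q" using split by blast
    have "take (length P) (P @ Q) = P" by simp
    then have "take (card s) ys = P" using PQ lenP by simp
    then have "ch (card s) = s" unfolding ch_def using setP by simp
    moreover have "card s \<le> CARD('n)" by (simp add: card_mono)
    ultimately show ?thesis by (intro image_eqI[of _ ch "card s"]) auto
  qed
  have "ch 0 = {}" unfolding ch_def by simp
  moreover have "ch CARD('n) = UNIV" unfolding ch_def using ys by simp
  ultimately show ?thesis
    apply (intro exI[of _ ch])
    using cc cs inS by blast
qed

theorem mainTheorem11:
  fixes w :: "'n::finite set \<Rightarrow> real"
  assumes "\<forall>g. w g \<ge> 0"
    and "generic_landscape w"
    and "universal_positive_epistasis w"
  shows "induced_triangulation w = staircase_triangulation"
proof
  show "induced_triangulation w \<subseteq> staircase_triangulation"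
  proof
    fix S assume S: "S \<in> induced_triangulation w"
    then have cell: "upper_cell w S" and mx: "\<forall>T. upper_cell w T \<longrightarrow> S \<subseteq> T \<longrightarrow> T = S"
      unfolding induced_triangulation_def by auto
    have "\<forall>x\<in>S. \<forall>y\<in>S. x \<subseteq> y \<or> y \<subseteq> x"
      using cell_chain[OF assms(2,3) cell] by blast
    then obtain ch :: "nat \<Rightarrow> 'n set" where ch: "ch 0 = {}" "ch CARD('n) = UNIV"
      "\<forall>k < CARD('n). ch k \<subset> ch (Suc k)" "\<forall>k \<le> CARD('n). card (ch k) = k"
      "S \<subseteq> ch ` {0..CARD('n)}"
      using chain_extend[of S] by auto
    have "upper_cell w (ch ` {0..CARD('n)})" using staircase_cell[OF assms(2,3) ch(1-4)] .
    then have eqS: "S = ch ` {0..CARD('n)}" using mx ch(5) by metis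
    show "S \<in> staircase_triangulation" unfolding staircase_triangulation_def
      apply (rule CollectI, rule exI[of _ ch])
      using ch(1-4) eqS by simp
  qed
next
  show "staircase_triangulation \<subseteq> induced_triangulation w"
  proof
    fix S assume "S \<in> (staircase_triangulation :: 'n set set set)"
    then obtain ch :: "nat \<Rightarrow> 'n set" where ch: "ch 0 = {}" "ch CARD('n) = UNIV"
      "\<forall>k < CARD('n). ch k \<subset> ch (Suc k)" "\<forall>k \<le> CARD('n). card (ch k) = k"
      "S = ch ` {0..CARD('n)}" unfolding staircase_triangulation_def by auto
    have cell: "upper_cell w S" using staircase_cell[OF assms(2,3) ch(1-4)] ch(5) by simp
    have "inj_on ch {0..CARD('n)}"
      by (rule inj_onI) (metis atLeastAtMost_iff ch(4))
    then have cS: "card S = CARD('n) + 1" using ch(5) by (simp add: card_image)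
    have "T = S" if "upper_cell w T" "S \<subseteq> T" for T
    proof -
      have "card T \<le> card S" using cell_card[OF assms(2) that(1)] cS by simp
      moreover have "card S \<le> card T" using that(2) by (rule card_mono[OF finite])
      ultimately show ?thesis using that(2) by (intro card_subset_eq[symmetric]) auto
    qed
    then show "S \<in> induced_triangulation w" unfolding induced_triangulation_def using cell by simp
  qed
qed

end
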